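(* There is no function $g:\mathbb{N}\to\mathbb{N}$ such that $\operatorname{bcrk}(D)\le g(\operatorname{dbw}(D))$ for every digraph $D$.
   Context: A layout of a symmetric function $f:2^U\to\mathbb{Z}$ on a finite set $U$ is a pair $(T,\beta)$, $T$ a tree of maximum degree at most three, $\beta$ a bijection from leaves of $T$ onto $U$; the order of a tree edge is $f(\beta(Y))$ for $Y$ the leaves on one side; width is the maximum order (0 if none); the layout-$f$-width of $U$ is the minimum width. Directed branch-width: $\operatorname{dbw}(D)$ is the layout-$f_D$-width of $E(D)$ where $f_D(X)=|S^V_X\cup S^V_{E(D)\setminus X}|$ and $S^V_X=\{y: \exists x,z,\ \vec{xy}\in E(D)\setminus X,\ \vec{yz}\in X\}$. Bi-cut-rank-width: with $M$ the $\mathrm{GF}(2)$ adjacency matrix of $D$ ($M_{uv}=1$ iff $\vec{uv}\in E(D)$), $g_D(X)=\operatorname{rk}(M[V(D)\setminus X,X])+\operatorname{rk}(M[X,V(D)\setminus X])$, and $\operatorname{bcrk}(D)$ is the layout-$g_D$-width of $V(D)$. *)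

theory Defs
  imports Main
begin

text \<open>A digraph on vertex set V (natural-number vertices) with arc set E:
  finite, arcs between vertices of V, no loops; parallel arcs are not possible
  since E is a set of ordered pairs.\<close>

definition digraph :: "nat set \<Rightarrow> (nat \<times> nat) set \<Rightarrow> bool" where
  "digraph V E \<longleftrightarrow> finite V \<and> E \<subseteq> V \<times> V \<and> (\<forall>x. (x, x) \<notin> E)"

definition tree_adj :: "nat set set \<Rightarrow> nat \<Rightarrow> nat \<Rightarrow> bool" where
  "tree_adj Ed x y \<longleftrightarrow> {x, y} \<in> Ed"

definition is_tree :: "nat set \<Rightarrow> nat set set \<Rightarrow> bool" where
  "is_tree N Ed \<longleftrightarrow> finite N \<and> N \<noteq> {}
     \<and> (\<forall>e\<in>Ed. \<exists>x y. x \<noteq> y \<and> x \<in> N \<and> y \<in> N \<and> e = {x, y})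
     \<and> (\<forall>x\<in>N. \<forall>y\<in>N. (tree_adj Ed)\<^sup>*\<^sup>* x y)
     \<and> card Ed + 1 = card N"

definition tdeg :: "nat set set \<Rightarrow> nat \<Rightarrow> nat" where
  "tdeg Ed x = card {e \<in> Ed. x \<in> e}"

definition subcubic_tree :: "nat set \<Rightarrow> nat set set \<Rightarrow> bool" where
  "subcubic_tree N Ed \<longleftrightarrow> is_tree N Ed \<and> (\<forall>x\<in>N. tdeg Ed x \<le> 3)"

definition leaves :: "nat set \<Rightarrow> nat set set \<Rightarrow> nat set" where
  "leaves N Ed = {x \<in> N. tdeg Ed x \<le> 1}"

definition side :: "nat set \<Rightarrow> nat set set \<Rightarrow> nat \<Rightarrow> nat \<Rightarrow> nat set" where
  "side N Ed a b = {x \<in> N. (tree_adj (Ed - {{a, b}}))\<^sup>*\<^sup>* a x}"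

definition is_layout :: "nat set \<Rightarrow> nat set set \<Rightarrow> (nat \<Rightarrow> 'u) \<Rightarrow> 'u set \<Rightarrow> bool" where
  "is_layout N Ed \<beta> U \<longleftrightarrow> subcubic_tree N Ed \<and> bij_betw \<beta> (leaves N Ed) U"

text \<open>The order of the edge {a,b} is f of the image of the leaves on the a-side
  (for symmetric f this does not depend on the chosen side).\<close>

definition layout_width ::
  "('u set \<Rightarrow> nat) \<Rightarrow> nat set \<Rightarrow> nat set set \<Rightarrow> (nat \<Rightarrow> 'u) \<Rightarrow> nat" where
  "layout_width f N Ed \<beta> =
     Max (insert 0 {f (\<beta> ` (leaves N Ed \<inter> side N Ed a b)) | a b. {a, b} \<in> Ed})"

text \<open>Layout-f-width of U: minimum width over all layouts (0 if U has none,
  i.e. U is empty).\<close>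

definition layout_f_width :: "('u set \<Rightarrow> nat) \<Rightarrow> 'u set \<Rightarrow> nat" where
  "layout_f_width f U = Inf {layout_width f N Ed \<beta> | N Ed \<beta>. is_layout N Ed \<beta> U}"

definition SV :: "(nat \<times> nat) set \<Rightarrow> (nat \<times> nat) set \<Rightarrow> nat set" where
  "SV E X = {y. \<exists>x z. (x, y) \<in> E - X \<and> (y, z) \<in> X}"

definition fD :: "(nat \<times> nat) set \<Rightarrow> (nat \<times> nat) set \<Rightarrow> nat" where
  "fD E X = card (SV E X \<union> SV E (E - X))"

definition dbw :: "nat set \<Rightarrow> (nat \<times> nat) set \<Rightarrow> nat" where
  "dbw V E = layout_f_width (fD E) E"

text \<open>Rank over GF(2) of the submatrix M[R,C] of the adjacency matrix
  (M_uv = 1 iff (u,v) in E): the maximum size of a set of rows that is linearly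
  independent over GF(2), i.e. no nonempty subset of these rows sums to the zero
  vector over GF(2).\<close>

definition gf2_indep_rows :: "(nat \<times> nat) set \<Rightarrow> nat set \<Rightarrow> nat set \<Rightarrow> bool" where
  "gf2_indep_rows E S C \<longleftrightarrow>
     (\<forall>T \<subseteq> S. T \<noteq> {} \<longrightarrow> (\<exists>c\<in>C. odd (card {r \<in> T. (r, c) \<in> E})))"

definition gf2_rank :: "(nat \<times> nat) set \<Rightarrow> nat set \<Rightarrow> nat set \<Rightarrow> nat" where
  "gf2_rank E R C = Max {card S | S. S \<subseteq> R \<and> finite S \<and> gf2_indep_rows E S C}"

definition gD :: "nat set \<Rightarrow> (nat \<times> nat) set \<Rightarrow> nat set \<Rightarrow> nat" where
  "gD V E X = gf2_rank E (V - X) X + gf2_rank E X (V - X)"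

definition bcrk :: "nat set \<Rightarrow> (nat \<times> nat) set \<Rightarrow> nat" where
  "bcrk V E = layout_f_width (gD V E) V"

end

theory Submission
  imports Defs
begin


abbreviation reach where "reach F x y \<equiv> (tree_adj F)\<^sup>*\<^sup>* x y"

lemma tree_adj_sym: "tree_adj F x y = tree_adj F y x"
  by (simp add: tree_adj_def insert_commute)

lemma reach_sym: "reach F x y \<Longrightarrow> reach F y x"
proof (induction rule: rtranclp_induct)
  case base then show ?case by simp
next
  case (step y z)
  then have "tree_adj F z y" using tree_adj_sym by metis
  then show ?case using step(3) by (rule converse_rtranclp_into_rtranclp)
qed

lemma reach_mono: "F \<subseteq> G \<Longrightarrow> reach F x y \<Longrightarrow> reach G x y"
  by (erule rtranclp_mono[THEN predicate2D, rotated]) (auto simp: tree_adj_def)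

lemma reach_finite:
  assumes "finite F" "\<forall>f\<in>F. finite f"
  shows "finite {y. reach F x y}"
proof -
  have "{y. reach F x y} \<subseteq> insert x (\<Union>F)"
  proof
    fix y assume "y \<in> {y. reach F x y}"
    then have "reach F x y" by simp
    then show "y \<in> insert x (\<Union>F)"
      by (induction rule: rtranclp_induct) (auto simp: tree_adj_def)
  qed
  moreover have "finite (insert x (\<Union>F))" using assms by auto
  ultimately show ?thesis by (rule finite_subset)
qed

lemma comp_bound:
  assumes "finite F" "\<forall>f\<in>F. \<exists>u v. u \<noteq> v \<and> f = {u, v}"
  shows "card {y. reach F x y} \<le> card {f\<in>F. f \<subseteq> {y. reach F x y}} + 1"
  using assms
proof (induction F arbitrary: x rule: finite_induct)
  case empty
  have "{y. reach {} x y} = {x}"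
  proof -
    have "reach {} x y \<Longrightarrow> y = x" for y
      by (induction rule: rtranclp_induct) (auto simp: tree_adj_def)
    then show ?thesis by auto
  qed
  then show ?case by simp
next
  case (insert e F)
  let ?R = "\<lambda>w. {y. reach F w y}"
  let ?R' = "{y. reach (insert e F) x y}"
  have fin2: "\<forall>f\<in>F. finite f" using insert.prems by fastforce
  have finR: "finite (?R w)" for w using reach_finite[OF insert.hyps(1) fin2] .
  have IH: "card (?R w) \<le> card {f\<in>F. f \<subseteq> ?R w} + 1" for w
    using insert.IH insert.prems by auto
  obtain u v where e: "u \<noteq> v" "e = {u, v}" using insert.prems by auto
  have Fsub: "F \<subseteq> insert e F" by auto
  have finE': "finite {f\<in>insert e F. f \<subseteq> S}" for S using insert.hyps(1) by auto
  have RsubR': "?R x \<subseteq> ?R'" using reach_mono[OF Fsub] by auto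
  have trans: "reach F a b \<Longrightarrow> reach F b c \<Longrightarrow> reach F a c" for a b c by auto
  have inv: "reach (insert e F) x y \<Longrightarrow>
     y \<in> ?R x \<union> (if u \<in> ?R x \<or> v \<in> ?R x then ?R u \<union> ?R v else {})" for y
  proof (induction rule: rtranclp_induct)
    case base then show ?case by simp
  next
    case (step y z)
    show ?case
    proof (cases "{y, z} = e")
      case True
      then have yz: "y \<in> {u, v}" "z \<in> {u,v}" using e by (auto simp: doubleton_eq_iff)
      then show ?thesis using step(3) by auto
    next
      case False
      then have "tree_adj F y z" using step(2) by (simp add: tree_adj_def)
      then have "reach F w y \<Longrightarrow> reach F w z" for w by auto
      then show ?thesis using step(3) by (auto split: if_splits)
    qed
  qed
  show ?case
  proof (cases "\<exists>a b. e = {a, b} \<and> a \<in> ?R x \<and> b \<notin> ?R x")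
    case True
    then obtain a b where ab: "e = {a, b}" "a \<in> ?R x" "b \<notin> ?R x" by blast
    have Ra: "?R a \<subseteq> ?R x" using ab(2) trans by auto
    have uv: "{u, v} = {a, b}" using e ab by simp
    have sub1: "?R' \<subseteq> ?R x \<union> ?R b"
    proof
      fix y assume "y \<in> ?R'"
      then have "y \<in> ?R x \<union> ?R u \<union> ?R v" using inv[of y] by (simp split: if_splits; blast)
      then show "y \<in> ?R x \<union> ?R b" using uv Ra by (auto simp: doubleton_eq_iff)
    qed
    have sub2: "?R b \<subseteq> ?R'"
    proof
      fix y assume "y \<in> ?R b"
      then have "reach (insert e F) b y" using reach_mono[OF Fsub] by auto
      moreover have "reach (insert e F) x a" using ab(2) reach_mono[OF Fsub] by auto
      moreover have "tree_adj (insert e F) a b" using ab(1) by (simp add: tree_adj_def)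
      ultimately have "reach (insert e F) x y" by (meson rtranclp.rtrancl_into_rtrancl rtranclp_trans)
      then show "y \<in> ?R'" by simp
    qed
    have Req: "?R' = ?R x \<union> ?R b" using sub1 sub2 RsubR' by auto
    have disj: "?R x \<inter> ?R b = {}"
    proof (rule ccontr)
      assume "?R x \<inter> ?R b \<noteq> {}"
      then obtain y where "reach F x y" "reach F b y" by auto
      then have "reach F x b" using reach_sym trans by blast
      then show False using ab(3) by simp
    qed
    have c1: "card ?R' = card (?R x) + card (?R b)"
      unfolding Req by (rule card_Un_disjoint[OF finR finR disj])
    let ?Ex = "{f\<in>F. f \<subseteq> ?R x}" and ?Eb = "{f\<in>F. f \<subseteq> ?R b}"
    have ne: "\<forall>f\<in>F. f \<noteq> {}" using insert.prems by fastforce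
    have d1: "?Ex \<inter> ?Eb = {}" using disj ne by blast
    have d2: "e \<notin> ?Ex \<union> ?Eb" using insert.hyps(2) by auto
    have "card (insert e (?Ex \<union> ?Eb)) = card ?Ex + card ?Eb + 1"
      using d1 d2 insert.hyps(1) by (simp add: card_Un_disjoint)
    moreover have "insert e (?Ex \<union> ?Eb) \<subseteq> {f\<in>insert e F. f \<subseteq> ?R'}"
    proof -
      have "b \<in> ?R b" by simp
      then have "e \<subseteq> ?R'" using ab(1,2) RsubR' sub2 by blast
      moreover have "?Ex \<subseteq> {f\<in>insert e F. f \<subseteq> ?R'}" using RsubR' by blast
      moreover have "?Eb \<subseteq> {f\<in>insert e F. f \<subseteq> ?R'}" using sub2 by blast
      ultimately show ?thesis by blast
    qed
    then have "card (insert e (?Ex \<union> ?Eb)) \<le> card {f\<in>insert e F. f \<subseteq> ?R'}"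
      by (rule card_mono[OF finE'])
    ultimately have "card ?Ex + card ?Eb + 1 \<le> card {f\<in>insert e F. f \<subseteq> ?R'}"
      by linarith
    then show ?thesis using c1 IH[of x] IH[of b] by linarith
  next
    case False
    have "u \<in> ?R x \<longleftrightarrow> v \<in> ?R x" using False e by (metis insert_commute)
    have "?R' \<subseteq> ?R x"
    proof
      fix y assume "y \<in> ?R'"
      then have "y \<in> ?R x \<union> (if u \<in> ?R x \<or> v \<in> ?R x then ?R u \<union> ?R v else {})" using inv by auto
      then show "y \<in> ?R x" using \<open>u \<in> ?R x \<longleftrightarrow> v \<in> ?R x\<close> trans by (auto split: if_splits)
    qed
    then have Req: "?R' = ?R x" using RsubR' by auto
    have "{f\<in>F. f \<subseteq> ?R x} \<subseteq> {f\<in>insert e F. f \<subseteq> ?R'}" using Req by auto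
    then have "card {f\<in>F. f \<subseteq> ?R x} \<le> card {f\<in>insert e F. f \<subseteq> ?R'}" by (rule card_mono[OF finE'])
    then show ?thesis using IH[of x] Req by simp
  qed
qed


lemma tree_edges:
  assumes "is_tree N Ed"
  shows "finite Ed" "\<forall>f\<in>Ed. \<exists>u v. u \<noteq> v \<and> f = {u, v}" "\<And>f. f \<in> Ed \<Longrightarrow> f \<subseteq> N"
    "finite N"
proof -
  have e: "\<forall>e\<in>Ed. \<exists>x y. x \<noteq> y \<and> x \<in> N \<and> y \<in> N \<and> e = {x, y}" "finite N"
    using assms by (auto simp: is_tree_def)
  then have "Ed \<subseteq> Pow N" by auto
  then show "finite Ed" using e(2) finite_subset by auto
  show "\<forall>f\<in>Ed. \<exists>u v. u \<noteq> v \<and> f = {u, v}" using e(1) by blast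
  show "\<And>f. f \<in> Ed \<Longrightarrow> f \<subseteq> N" using e by auto
  show "finite N" by fact
qed

lemma edge_ends:
  assumes "is_tree N Ed" "{a, b} \<in> Ed"
  shows "a \<in> N" "b \<in> N" "a \<noteq> b"
proof -
  have "\<forall>e\<in>Ed. \<exists>x y. x \<noteq> y \<and> x \<in> N \<and> y \<in> N \<and> e = {x, y}" using assms(1) by (simp add: is_tree_def)
  then obtain x y where "x \<noteq> y" "x \<in> N" "y \<in> N" "{a,b} = {x, y}"
    using assms(2) by blast
  then show "a \<in> N" "b \<in> N" "a \<noteq> b" by (auto simp: doubleton_eq_iff)
qed

lemma bridge_cover:
  assumes conn: "\<forall>x\<in>N. \<forall>y\<in>N. reach Ed x y" and aN: "a \<in> N"
   and r: "reach (Ed - {{a, b}}) a b"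
  shows "N \<subseteq> {y. reach (Ed - {{a, b}}) a y}"
proof
  fix y assume "y \<in> N"
  then have "reach Ed a y" using conn aN by blast
  then show "y \<in> {y. reach (Ed - {{a, b}}) a y}"
  proof (induction rule: rtranclp_induct)
    case base then show ?case by simp
  next
    case (step y z)
    show ?case
    proof (cases "{y, z} = {a, b}")
      case True
      then have "z = a \<or> z = b" by (auto simp: doubleton_eq_iff)
      then show ?thesis using r by auto
    next
      case False
      then have "tree_adj (Ed - {{a, b}}) y z" using step(2) by (simp add: tree_adj_def)
      then show ?thesis using step(3) by (simp add: rtranclp.rtrancl_into_rtrancl)
    qed
  qed
qed

lemma bridge:
  assumes T: "is_tree N Ed" and ab: "{a, b} \<in> Ed"
  shows "\<not> reach (Ed - {{a, b}}) a b"
proof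
  let ?F = "Ed - {{a, b}}"
  assume r: "reach ?F a b"
  have aN: "a \<in> N" using edge_ends[OF T ab] by simp
  have conn: "\<forall>x\<in>N. \<forall>y\<in>N. reach Ed x y" using T by (simp add: is_tree_def)
  have cov: "N \<subseteq> {y. reach ?F a y}" by (rule bridge_cover[OF conn aN r])
  have finEd: "finite Ed" by (rule tree_edges(1)[OF T])
  have finF: "finite ?F" using finEd by (rule finite_Diff)
  have fF: "\<forall>f\<in>?F. \<exists>u v. u \<noteq> v \<and> f = {u, v}" using tree_edges(2)[OF T] by blast
  have fin2: "\<forall>f\<in>?F. finite f" using fF by (metis finite.emptyI finite_insert)
  have c1: "card N \<le> card {y. reach ?F a y}"
    by (rule card_mono[OF reach_finite[OF finF fin2] cov])
  have c2: "card {y. reach ?F a y} \<le> card {f\<in>?F. f \<subseteq> {y. reach ?F a y}} + 1"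
    by (rule comp_bound[OF finF fF])
  have c3: "card {f\<in>?F. f \<subseteq> {y. reach ?F a y}} \<le> card ?F" by (rule card_mono[OF finF]) blast
  have c4: "card ?F + 1 = card Ed"
  proof -
    have "Ed \<noteq> {}" using ab by blast
    then have "card Ed > 0" using finEd by (simp add: card_gt_0_iff)
    then show ?thesis using card_Diff_singleton[OF ab] by linarith
  qed
  have "card Ed + 1 = card N" using T by (simp add: is_tree_def)
  then show False using c1 c2 c3 c4 by linarith
qed

lemma side_sub: "side N Ed a b \<subseteq> N" by (auto simp: side_def)

lemma side_self:
  assumes "is_tree N Ed" "{a, b} \<in> Ed" shows "a \<in> side N Ed a b"
  using edge_ends[OF assms] by (simp add: side_def)

lemma side_cover:
  assumes T: "is_tree N Ed" and ab: "{a, b} \<in> Ed" and x: "x \<in> N"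
  shows "x \<in> side N Ed a b \<or> x \<in> side N Ed b a"
proof -
  let ?F = "Ed - {{a, b}}"
  have eqF: "Ed - {{b, a}} = ?F" by (simp add: insert_commute)
  have aN: "a \<in> N" using edge_ends[OF T ab] by simp
  have "reach Ed a x" using T x aN by (simp add: is_tree_def)
  then have "reach ?F a x \<or> reach ?F b x"
  proof (induction rule: rtranclp_induct)
    case base then show ?case by simp
  next
    case (step y z)
    show ?case
    proof (cases "{y, z} = {a, b}")
      case True
      then have "z = a \<or> z = b" by (auto simp: doubleton_eq_iff)
      then show ?thesis by auto
    next
      case False
      then have "tree_adj ?F y z" using step(2) by (simp add: tree_adj_def)
      then show ?thesis using step(3) by (meson rtranclp.rtrancl_into_rtrancl)
    qed
  qed
  then show ?thesis using x eqF by (auto simp: side_def)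
qed

lemma side_disj:
  assumes T: "is_tree N Ed" and ab: "{a, b} \<in> Ed"
  shows "side N Ed a b \<inter> side N Ed b a = {}"
proof (rule ccontr)
  let ?F = "Ed - {{a, b}}"
  have eqF: "Ed - {{b, a}} = ?F" by (simp add: insert_commute)
  assume "side N Ed a b \<inter> side N Ed b a \<noteq> {}"
  then obtain x where "reach ?F a x" "reach ?F b x" using eqF by (auto simp: side_def)
  then have "reach ?F a b" using reach_sym by (meson rtranclp_trans)
  then show False using bridge[OF T ab] by simp
qed

lemma path_first:
  "reach G a x \<Longrightarrow> x = a \<or> (\<exists>c. tree_adj G a c \<and> (\<lambda>u v. tree_adj G u v \<and> u \<noteq> a \<and> v \<noteq> a)\<^sup>*\<^sup>* c x)"
proof (induction rule: rtranclp_induct)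
  case base then show ?case by simp
next
  case (step y z)
  show ?case
  proof (cases "z = a")
    case True then show ?thesis by simp
  next
    case zn: False
    from step(3) show ?thesis
    proof
      assume "y = a" then show ?thesis using step(2) zn by auto
    next
      assume "\<exists>c. tree_adj G a c \<and> (\<lambda>u v. tree_adj G u v \<and> u \<noteq> a \<and> v \<noteq> a)\<^sup>*\<^sup>* c y"
      then obtain c where c: "tree_adj G a c" "(\<lambda>u v. tree_adj G u v \<and> u \<noteq> a \<and> v \<noteq> a)\<^sup>*\<^sup>* c y" by blast
      show ?thesis
      proof (cases "y = a")
        case True then show ?thesis using step(2) zn by auto
      next
        case False
        then have "(\<lambda>u v. tree_adj G u v \<and> u \<noteq> a \<and> v \<noteq> a)\<^sup>*\<^sup>* c z"
          using c(2) step(2) zn by (simp add: rtranclp.rtrancl_into_rtrancl)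
        then show ?thesis using c(1) by blast
      qed
    qed
  qed
qed

lemma side_split:
  assumes T: "is_tree N Ed" and ab: "{a, b} \<in> Ed" and x: "x \<in> side N Ed a b" and xa: "x \<noteq> a"
  shows "\<exists>c. {a, c} \<in> Ed \<and> c \<noteq> b \<and> x \<in> side N Ed c a"
proof -
  let ?F = "Ed - {{a, b}}"
  have r: "reach ?F a x" and xN: "x \<in> N" using x by (auto simp: side_def)
  from path_first[OF r] xa obtain c where c: "tree_adj ?F a c"
    "(\<lambda>u v. tree_adj ?F u v \<and> u \<noteq> a \<and> v \<noteq> a)\<^sup>*\<^sup>* c x" by blast
  have ac: "{a, c} \<in> Ed" "{a,c} \<noteq> {a, b}" using c(1) by (auto simp: tree_adj_def)
  then have cb: "c \<noteq> b" by auto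
  have "(\<lambda>u v. tree_adj ?F u v \<and> u \<noteq> a \<and> v \<noteq> a) \<le> tree_adj (Ed - {{c, a}})"
    by (auto simp: tree_adj_def doubleton_eq_iff)
  then have "reach (Ed - {{c, a}}) c x" using c(2) by (rule rtranclp_mono[THEN predicate2D])
  then show ?thesis using ac cb xN by (auto simp: side_def)
qed

lemma side_child:
  assumes T: "is_tree N Ed" and ab: "{a, b} \<in> Ed" and ac: "{a, c} \<in> Ed" and cb: "c \<noteq> b"
  shows "side N Ed c a \<subseteq> side N Ed a b" "a \<notin> side N Ed c a"
proof -
  let ?F = "Ed - {{a, b}}" and ?G = "Ed - {{c, a}}"
  have ca: "{c, a} \<in> Ed" using ac by (simp add: insert_commute)
  have nb: "\<not> reach ?G c a" using bridge[OF T ca] .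
  then show "a \<notin> side N Ed c a" by (simp add: side_def)
  have anb: "a \<noteq> b" using edge_ends[OF T ab] by simp
  have base: "tree_adj ?F a c" using ac cb anb by (auto simp: tree_adj_def doubleton_eq_iff)
  have "reach ?G c y \<Longrightarrow> reach ?F a y" for y
  proof (induction rule: rtranclp_induct)
    case base then show ?case using \<open>tree_adj ?F a c\<close> by auto
  next
    case (step y z)
    have "y \<noteq> a" using step(1) nb by auto
    moreover have "z \<noteq> a" using step(1,2) nb by (metis rtranclp.rtrancl_into_rtrancl)
    ultimately have "tree_adj ?F y z" using step(2) by (auto simp: tree_adj_def doubleton_eq_iff)
    then show ?case using step(3) by (meson rtranclp.rtrancl_into_rtrancl)
  qed
  then show "side N Ed c a \<subseteq> side N Ed a b" by (auto simp: side_def)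
qed


lemma balanced_edge:
  assumes ST: "subcubic_tree N Ed" and W: "W \<subseteq> leaves N Ed" and cW: "card W = m"
    and k1: "1 \<le> k" and km: "3 * k \<le> m"
  shows "\<exists>a b. {a, b} \<in> Ed \<and> k \<le> card (W \<inter> side N Ed a b) \<and> k \<le> card (W - side N Ed a b)"
proof -
  have T: "is_tree N Ed" and deg: "\<forall>x\<in>N. tdeg Ed x \<le> 3" using ST by (auto simp: subcubic_tree_def)
  have finN: "finite N" using tree_edges(4)[OF T] .
  have finEd: "finite Ed" using tree_edges(1)[OF T] .
  have WN: "W \<subseteq> N" using W by (auto simp: leaves_def)
  have finW: "finite W" using finite_subset[OF WN finN] .
  have "Ed \<noteq> {}"
  proof
    assume "Ed = {}"
    then have "card N = 1" using T by (simp add: is_tree_def)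
    then have "card W \<le> 1" using card_mono[OF finN WN] by simp
    then show False using cW k1 km by simp
  qed
  then obtain e0 where "e0 \<in> Ed" by blast
  then have "\<exists>u v. u \<noteq> v \<and> e0 = {u,v}" using tree_edges(2)[OF T] by (simp only: Ball_def)
  then obtain a0 b0 where "e0 = {a0, b0}" by blast
  then have e0: "{a0, b0} \<in> Ed" using \<open>e0 \<in> Ed\<close> by simp
  have cover: "card W \<le> card (W \<inter> side N Ed a b) + card (W \<inter> side N Ed b a)" if "{a, b} \<in> Ed" for a b
  proof -
    have "W \<subseteq> (W \<inter> side N Ed a b) \<union> (W \<inter> side N Ed b a)" using side_cover[OF T that] WN by blast
    then have "card W \<le> card ((W \<inter> side N Ed a b) \<union> (W \<inter> side N Ed b a))"
      using finW by (intro card_mono) auto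
    also have "\<dots> \<le> card (W \<inter> side N Ed a b) + card (W \<inter> side N Ed b a)" by (rule card_Un_le)
    finally show ?thesis .
  qed
  define P where "P n \<longleftrightarrow> (\<exists>a b. {a, b} \<in> Ed \<and> k \<le> card (W \<inter> side N Ed a b) \<and> card (side N Ed a b) = n)" for n
  have "\<exists>n. P n"
  proof (cases "k \<le> card (W \<inter> side N Ed a0 b0)")
    case True then show ?thesis unfolding P_def using e0 by blast
  next
    case False
    have "k \<le> card (W \<inter> side N Ed b0 a0)" using cover[OF e0] False cW km by linarith
    moreover have "{b0, a0} \<in> Ed" using e0 by (simp add: insert_commute)
    ultimately show ?thesis unfolding P_def by blast
  qed
  then have Pn0: "P (LEAST n. P n)" by (rule LeastI_ex)
  define n0 where "n0 = (LEAST n. P n)"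
  have minP: "\<not> P n" if "n < n0" for n using that unfolding n0_def by (rule not_less_Least)
  obtain a b where ab: "{a, b} \<in> Ed" and wk: "k \<le> card (W \<inter> side N Ed a b)"
     and cs: "card (side N Ed a b) = n0" using Pn0 unfolding P_def n0_def by blast
  define S where "S = side N Ed a b"
  define C where "C = {c. {a, c} \<in> Ed \<and> c \<noteq> b}"
  have aN: "a \<in> N" using edge_ends[OF T ab] by simp
  have finS: "finite S" using finite_subset[OF side_sub finN] unfolding S_def .
  have small: "card (W \<inter> side N Ed c a) \<le> k - 1" if c: "c \<in> C" for c
  proof (rule ccontr)
    assume "\<not> ?thesis"
    then have kc: "k \<le> card (W \<inter> side N Ed c a)" by simp
    have ac: "{a, c} \<in> Ed" "c \<noteq> b" using c by (auto simp: C_def)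
    have ca: "{c, a} \<in> Ed" using ac by (simp add: insert_commute)
    have sub: "side N Ed c a \<subseteq> S" "a \<notin> side N Ed c a" using side_child[OF T ab ac] unfolding S_def by auto
    have "a \<in> S" using side_self[OF T ab] unfolding S_def .
    then have "side N Ed c a \<subset> S" using sub by blast
    then have "card (side N Ed c a) < n0" using psubset_card_mono[OF finS] cs unfolding S_def by simp
    moreover have "P (card (side N Ed c a))" unfolding P_def using ca kc by blast
    ultimately show False using minP by blast
  qed
  have finC: "finite C"
  proof -
    have "C \<subseteq> N" using edge_ends[OF T] by (auto simp: C_def)
    then show ?thesis using finite_subset finN by blast
  qed
  have cardC: "card C + 1 \<le> tdeg Ed a"
  proof -
    have inj: "inj_on (\<lambda>c. {a, c}) C"
    proof (rule inj_onI)
      fix c c' assume "c \<in> C" "c' \<in> C" "{a, c} = {a, c'}"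
      moreover have "a \<noteq> c" using \<open>c \<in> C\<close> edge_ends[OF T] by (auto simp: C_def)
      ultimately show "c = c'" by (auto simp: doubleton_eq_iff)
    qed
    have img: "(\<lambda>c. {a, c}) ` C \<subseteq> {e \<in> Ed. a \<in> e} - {{a, b}}" by (auto simp: C_def doubleton_eq_iff)
    have finD: "finite {e \<in> Ed. a \<in> e}" using finEd by simp
    have "card C = card ((\<lambda>c. {a, c}) ` C)" using card_image[OF inj] by simp
    also have "\<dots> \<le> card ({e \<in> Ed. a \<in> e} - {{a, b}})" by (rule card_mono[OF _ img]) (use finD in simp)
    also have "\<dots> = card {e \<in> Ed. a \<in> e} - 1" by (rule card_Diff_singleton) (use ab in simp)
    finally have "card C \<le> card {e \<in> Ed. a \<in> e} - 1" .
    moreover have "card {e \<in> Ed. a \<in> e} > 0" using finD ab by (auto simp: card_gt_0_iff)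
    ultimately show ?thesis unfolding tdeg_def by linarith
  qed
  have sub: "W \<inter> S \<subseteq> (W \<inter> {a}) \<union> (\<Union>c\<in>C. W \<inter> side N Ed c a)"
  proof
    fix x assume x: "x \<in> W \<inter> S"
    show "x \<in> (W \<inter> {a}) \<union> (\<Union>c\<in>C. W \<inter> side N Ed c a)"
    proof (cases "x = a")
      case True then show ?thesis using x by blast
    next
      case False
      then obtain c where "{a, c} \<in> Ed" "c \<noteq> b" "x \<in> side N Ed c a"
        using side_split[OF T ab] x unfolding S_def by blast
      then show ?thesis using x unfolding C_def by blast
    qed
  qed
  have "card (W \<inter> S) \<le> card ((W \<inter> {a}) \<union> (\<Union>c\<in>C. W \<inter> side N Ed c a))"
    by (rule card_mono[OF _ sub]) (use finW finC in auto)
  also have "\<dots> \<le> card (W \<inter> {a}) + card (\<Union>c\<in>C. W \<inter> side N Ed c a)" by (rule card_Un_le)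
  also have "card (\<Union>c\<in>C. W \<inter> side N Ed c a) \<le> (\<Sum>c\<in>C. card (W \<inter> side N Ed c a))"
    by (rule card_UN_le[OF finC])
  also have "(\<Sum>c\<in>C. card (W \<inter> side N Ed c a)) \<le> card C * (k - 1)"
    using sum_bounded_above[of C "\<lambda>c. card (W \<inter> side N Ed c a)" "k - 1"] small by simp
  finally have bound: "card (W \<inter> S) \<le> card (W \<inter> {a}) + card C * (k - 1)" by simp
  have "card (W \<inter> S) \<le> 2 * k"
  proof (cases "a \<in> W")
    case True
    then have "tdeg Ed a \<le> 1" using W by (auto simp: leaves_def)
    then have "card C = 0" using cardC by simp
    moreover have "card (W \<inter> {a}) \<le> card {a}" by (rule card_mono) auto
    ultimately show ?thesis using bound k1 by simp
  next
    case False
    then have "card (W \<inter> {a}) = 0" by simp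
    moreover have "tdeg Ed a \<le> 3" using deg aN by blast
    ultimately have "card C \<le> 2" using cardC by linarith
    then have "card C * (k - 1) \<le> 2 * (k - 1)" by (rule mult_le_mono1)
    then have "card (W \<inter> S) \<le> 2 * (k - 1)" using bound \<open>card (W \<inter> {a}) = 0\<close> by linarith
    then show ?thesis by simp
  qed
  moreover have "card (W - S) = card W - card (W \<inter> S)" using finW by (simp add: card_Diff_subset_Int)
  ultimately have "k \<le> card (W - S)" using cW km by linarith
  then show ?thesis using ab wk unfolding S_def by blast
qed



lemma layout_single: "is_layout {0} {} (\<lambda>_. u) {u}"
proof -
  have t: "is_tree {0} {}" by (simp add: is_tree_def)
  have d: "tdeg {} x = 0" for x by (simp add: tdeg_def)
  have l: "leaves {0} {} = {0}" by (simp add: leaves_def d)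
  show ?thesis unfolding is_layout_def subcubic_tree_def using t d l by (simp add: bij_betw_def)
qed

lemma layout_step:
  assumes lay: "is_layout N Ed \<beta> U" and xU: "x \<notin> U" and Une: "U \<noteq> {}"
  shows "\<exists>N' Ed' \<beta>'. is_layout N' Ed' \<beta>' (insert x U)"
proof -
  have ST: "subcubic_tree N Ed" and bij: "bij_betw \<beta> (leaves N Ed) U" using lay by (auto simp: is_layout_def)
  have T: "is_tree N Ed" and deg: "\<forall>y\<in>N. tdeg Ed y \<le> 3" using ST by (auto simp: subcubic_tree_def)
  have finN: "finite N" using tree_edges(4)[OF T] .
  have finEd: "finite Ed" using tree_edges(1)[OF T] .
  have EdN: "\<And>f. f \<in> Ed \<Longrightarrow> f \<subseteq> N" using tree_edges(3)[OF T] .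
  define L where "L = leaves N Ed"
  have "L \<noteq> {}" using bij Une unfolding L_def by (auto simp: bij_betw_def)
  then obtain l where lL: "l \<in> L" by blast
  have lN: "l \<in> N" and ldeg: "tdeg Ed l \<le> 1" using lL by (auto simp: L_def leaves_def)
  define n1 where "n1 = Suc (Max N)"
  define n2 where "n2 = Suc (Suc (Max N))"
  have n1N: "n1 \<notin> N" unfolding n1_def using Max_ge[OF finN] by fastforce
  have n2N: "n2 \<notin> N" unfolding n2_def using Max_ge[OF finN] by fastforce
  have n12: "n1 \<noteq> n2" "l \<noteq> n1" "l \<noteq> n2" using lN n1N n2N by (auto simp: n1_def n2_def)
  define N' where "N' = insert n1 (insert n2 N)"
  define Ed' where "Ed' = insert {l, n1} (insert {l, n2} Ed)"
  define \<beta>' where "\<beta>' = \<beta>(n1 := \<beta> l, n2 := x)"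
  have e1: "{l, n1} \<notin> Ed" using EdN n1N by blast
  have e2: "{l, n2} \<notin> Ed" using EdN n2N by blast
  have e12: "{l, n1} \<noteq> {l, n2}" using n12 by (auto simp: doubleton_eq_iff)
  have cardEd': "card Ed' = card Ed + 2" unfolding Ed'_def using e1 e2 e12 finEd by simp
  have cardN': "card N' = card N + 2" unfolding N'_def using n1N n2N n12 finN by simp
  have fmt: "\<forall>e\<in>Ed'. \<exists>a b. a \<noteq> b \<and> a \<in> N' \<and> b \<in> N' \<and> e = {a, b}"
  proof
    fix e assume "e \<in> Ed'"
    then consider "e = {l, n1}" | "e = {l, n2}" | "e \<in> Ed" unfolding Ed'_def by blast
    then show "\<exists>a b. a \<noteq> b \<and> a \<in> N' \<and> b \<in> N' \<and> e = {a, b}"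
    proof cases
      case 1 then show ?thesis using n12 lN unfolding N'_def by blast
    next
      case 2 then show ?thesis using n12 lN unfolding N'_def by blast
    next
      case 3
      have "\<forall>e\<in>Ed. \<exists>a b. a \<noteq> b \<and> a \<in> N \<and> b \<in> N \<and> e = {a, b}" using T by (simp add: is_tree_def)
      then obtain a b where "a \<noteq> b" "a \<in> N" "b \<in> N" "e = {a, b}" using 3 by (simp only: Ball_def) blast
      then show ?thesis unfolding N'_def by blast
    qed
  qed
  have EdEd': "Ed \<subseteq> Ed'" unfolding Ed'_def by blast
  have fromL: "reach Ed' l y" if "y \<in> N'" for y
  proof -
    from that consider "y = n1" | "y = n2" | "y \<in> N" unfolding N'_def by blast
    then show ?thesis
    proof cases
      case 1 then have "tree_adj Ed' l y" by (simp add: tree_adj_def Ed'_def)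
      then show ?thesis by simp
    next
      case 2 then have "tree_adj Ed' l y" by (simp add: tree_adj_def Ed'_def)
      then show ?thesis by simp
    next
      case 3 then have "reach Ed l y" using T lN by (simp add: is_tree_def)
      then show ?thesis by (rule reach_mono[OF EdEd'])
    qed
  qed
  have conn: "\<forall>a\<in>N'. \<forall>b\<in>N'. reach Ed' a b"
    using fromL reach_sym by (meson rtranclp_trans)
  have T': "is_tree N' Ed'"
    unfolding is_tree_def using fmt conn cardEd' cardN' T finN
    by (simp add: is_tree_def N'_def)
  have degsame: "{e \<in> Ed'. y \<in> e} = {e \<in> Ed. y \<in> e}" if "y \<noteq> l" "y \<noteq> n1" "y \<noteq> n2" for y
    using that unfolding Ed'_def by auto
  have degl: "{e \<in> Ed'. l \<in> e} = insert {l, n1} (insert {l, n2} {e \<in> Ed. l \<in> e})"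
    unfolding Ed'_def by auto
  have degn1: "{e \<in> Ed'. n1 \<in> e} = {{l, n1}}"
    unfolding Ed'_def using EdN n1N n12 by (auto simp: doubleton_eq_iff)
  have degn2: "{e \<in> Ed'. n2 \<in> e} = {{l, n2}}"
    unfolding Ed'_def using EdN n2N n12 by (auto simp: doubleton_eq_iff)
  have tl: "tdeg Ed' l = tdeg Ed l + 2" unfolding tdeg_def degl using e1 e2 e12 finEd by simp
  have t1: "tdeg Ed' n1 = 1" unfolding tdeg_def degn1 by simp
  have t2: "tdeg Ed' n2 = 1" unfolding tdeg_def degn2 by simp
  have ts: "tdeg Ed' y = tdeg Ed y" if "y \<noteq> l" "y \<noteq> n1" "y \<noteq> n2" for y
    unfolding tdeg_def using degsame[OF that] by simp
  have deg': "\<forall>y\<in>N'. tdeg Ed' y \<le> 3"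
  proof
    fix y assume "y \<in> N'"
    then consider "y = n1" | "y = n2" | "y = l" | "y \<in> N" "y \<noteq> l" unfolding N'_def by blast
    then show "tdeg Ed' y \<le> 3"
    proof cases
      case 1 then show ?thesis using t1 by simp
    next
      case 2 then show ?thesis using t2 by simp
    next
      case 3 then show ?thesis using tl ldeg by simp
    next
      case 4 then have "y \<noteq> n1" "y \<noteq> n2" using n1N n2N by auto
      then show ?thesis using ts[of y] 4 deg by simp
    qed
  qed
  have leaves': "leaves N' Ed' = insert n1 (insert n2 (L - {l}))"
  proof (rule set_eqI)
    fix y
    show "y \<in> leaves N' Ed' \<longleftrightarrow> y \<in> insert n1 (insert n2 (L - {l}))"
    proof (cases "y = n1 \<or> y = n2 \<or> y = l")
      case True then show ?thesis using t1 t2 tl n12 lN unfolding leaves_def N'_def L_def by auto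
    next
      case False
      then have "tdeg Ed' y = tdeg Ed y" using ts by blast
      then show ?thesis using False unfolding leaves_def N'_def L_def by auto
    qed
  qed
  have inj: "inj_on \<beta> L" and img: "\<beta> ` L = U" using bij unfolding L_def bij_betw_def by auto
  have n1L: "n1 \<notin> L" "n2 \<notin> L" using n1N n2N unfolding L_def leaves_def by auto
  have bij': "bij_betw \<beta>' (insert n1 (insert n2 (L - {l}))) (insert x U)"
  proof -
    define A0 where "A0 = L - {l}"
    have eqA: "\<beta>' y = \<beta> y" if "y \<in> A0" for y using that n1L unfolding \<beta>'_def A0_def by auto
    have imA: "\<beta>' ` A0 = \<beta> ` A0" using eqA by (rule image_cong[OF refl])
    have injA: "inj_on \<beta>' A0"
      using inj_on_subset[OF inj, of A0] eqA unfolding A0_def inj_on_def by auto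
    have bl: "\<beta> l \<in> U" "\<beta> l \<notin> \<beta> ` A0" using lL img inj unfolding A0_def inj_on_def by auto
    have bA: "\<beta> ` A0 \<subseteq> U" using img unfolding A0_def by auto
    have v1: "\<beta>' n1 = \<beta> l" "\<beta>' n2 = x" using n12 unfolding \<beta>'_def by auto
    have n2A: "n2 \<notin> A0" "n1 \<notin> A0" using n1L unfolding A0_def by auto
    have "inj_on \<beta>' (insert n2 A0)" using injA v1 imA bA xU n2A by (simp add: inj_on_insert) blast
    moreover have "\<beta>' n1 \<notin> \<beta>' ` (insert n2 A0 - {n1})"
    proof -
      have "insert n2 A0 - {n1} = insert n2 A0" using n12 n2A by auto
      then show ?thesis using v1 imA bl xU by auto
    qed
    ultimately have "inj_on \<beta>' (insert n1 (insert n2 A0))" by (simp only: inj_on_insert) blast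
    moreover have "\<beta>' ` (insert n1 (insert n2 A0)) = insert x U"
    proof -
      have "\<beta>' ` (insert n1 (insert n2 A0)) = insert (\<beta> l) (insert x (\<beta> ` A0))" using v1 imA by simp
      also have "\<dots> = insert x U" using img lL unfolding A0_def by blast
      finally show ?thesis .
    qed
    ultimately show ?thesis unfolding bij_betw_def A0_def by blast
  qed
  show ?thesis
    using T' deg' bij' leaves' unfolding is_layout_def subcubic_tree_def by metis
qed

lemma layout_exists:
  assumes "finite U" "U \<noteq> {}"
  shows "\<exists>N Ed (\<beta>::nat \<Rightarrow> 'u). is_layout N Ed \<beta> U"
  using assms
proof (induction U rule: finite_ne_induct)
  case (singleton x) then show ?case using layout_single[of x] by blast
next
  case (insert x F)
  then obtain N Ed \<beta> where "is_layout N Ed (\<beta>::nat \<Rightarrow> 'u) F" by blast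
  then show ?case by (rule layout_step) (use insert.hyps in auto)
qed



definition enc :: "nat \<Rightarrow> nat \<Rightarrow> nat \<Rightarrow> nat" where "enc m i j = m + i * m + j"

definition GV :: "nat \<Rightarrow> nat set" where
  "GV m = {..<m} \<union> {enc m i j | i j. i < m \<and> j < m \<and> i \<noteq> j}"

definition GE :: "nat \<Rightarrow> (nat \<times> nat) set" where
  "GE m = {(i, enc m i j) | i j. i < m \<and> j < m \<and> i \<noteq> j} \<union> {(j, enc m i j) | i j. i < m \<and> j < m \<and> i \<noteq> j}"

lemma enc_inj:
  assumes "enc m i j = enc m i' j'" "j < m" "j' < m"
  shows "i = i' \<and> j = j'"
proof -
  have e: "j + i * m = j' + i' * m" using assms(1) by (simp add: enc_def)
  have "(j + i * m) mod m = j" using assms(2) by simp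
  moreover have "(j' + i' * m) mod m = j'" using assms(3) by simp
  ultimately have jj: "j = j'" using e by simp
  then have "i * m = i' * m" using e by simp
  moreover have "m > 0" using assms(2) by simp
  ultimately show ?thesis using jj by simp
qed

lemma enc_ge: "m \<le> enc m i j" by (simp add: enc_def)

lemma GE_adj:
  assumes "i < m" "j < m" "i \<noteq> j"
  shows "(r, enc m i j) \<in> GE m \<longleftrightarrow> r = i \<or> r = j"
proof
  assume "(r, enc m i j) \<in> GE m"
  then obtain i' j' where "j' < m" "enc m i j = enc m i' j'" "r = i' \<or> r = j'"
    unfolding GE_def by blast
  then show "r = i \<or> r = j" using enc_inj assms(2) by metis
next
  assume "r = i \<or> r = j"
  then show "(r, enc m i j) \<in> GE m" unfolding GE_def using assms by blast
qed

lemma GE_src: "(x, y) \<in> GE m \<Longrightarrow> x < m \<and> m \<le> y"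
  unfolding GE_def using enc_ge by auto

lemma GV_finite: "finite (GV m)"
proof -
  have "{enc m i j | i j. i < m \<and> j < m \<and> i \<noteq> j} \<subseteq> (\<lambda>(i, j). enc m i j) ` ({..<m} \<times> {..<m})"
    by auto
  then show ?thesis unfolding GV_def by (meson finite_Un finite_SigmaI finite_imageI finite_lessThan finite_subset)
qed

lemma GE_sub: "GE m \<subseteq> GV m \<times> GV m"
  unfolding GE_def GV_def by auto

lemma digraph_G: "digraph (GV m) (GE m)"
  unfolding digraph_def using GV_finite GE_sub GE_src by fastforce

lemma GE_finite: "finite (GE m)"
  using finite_subset[OF GE_sub] GV_finite by blast

lemma SV_empty: "X \<subseteq> GE m \<Longrightarrow> SV (GE m) X = {}"
proof -
  assume X: "X \<subseteq> GE m"
  have "False" if "(x, y) \<in> GE m" "(y, z) \<in> X" for x y z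
  proof -
    have "(y, z) \<in> GE m" using that(2) X by (rule subsetD[rotated])
    then have "y < m" by (rule GE_src[THEN conjunct1])
    moreover have "m \<le> y" using that(1) by (rule GE_src[THEN conjunct2])
    ultimately show False by simp
  qed
  then show ?thesis unfolding SV_def by auto
qed

lemma fD_zero: "X \<subseteq> GE m \<Longrightarrow> fD (GE m) X = 0"
  unfolding fD_def using SV_empty[of X m] SV_empty[of "GE m - X" m] by simp

lemma dbw_G:
  assumes "2 \<le> m"
  shows "dbw (GV m) (GE m) = 0"
proof -
  have ne: "GE m \<noteq> {}"
  proof -
    have "(0::nat) < m" "(1::nat) < m" "(0::nat) \<noteq> 1" using assms by auto
    then have "(0, enc m 0 1) \<in> GE m" unfolding GE_def by blast
    then show ?thesis by blast
  qed
  obtain N Ed \<beta> where lay: "is_layout N Ed (\<beta>::nat \<Rightarrow> nat \<times> nat) (GE m)"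
    using layout_exists[OF GE_finite ne] by blast
  have w0: "layout_width (fD (GE m)) N' Ed' \<beta>' = 0" if "is_layout N' Ed' \<beta>' (GE m)" for N' Ed' \<beta>'
  proof -
    have img: "\<beta>' ` leaves N' Ed' = GE m" using that unfolding is_layout_def bij_betw_def by blast
    have "fD (GE m) (\<beta>' ` (leaves N' Ed' \<inter> side N' Ed' a b)) = 0" for a b
      by (rule fD_zero) (use img in blast)
    then have "{fD (GE m) (\<beta>' ` (leaves N' Ed' \<inter> side N' Ed' a b)) | a b. {a, b} \<in> Ed'} \<subseteq> {0}"
      by (smt (verit) mem_Collect_eq singletonI subsetI)
    then have "insert 0 {fD (GE m) (\<beta>' ` (leaves N' Ed' \<inter> side N' Ed' a b)) | a b. {a, b} \<in> Ed'} = {0}"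
      by blast
    then show ?thesis unfolding layout_width_def by (simp only: Max_singleton)
  qed
  have s1: "{layout_width (fD (GE m)) N Ed \<beta> | N Ed \<beta>. is_layout N Ed \<beta> (GE m)} \<subseteq> {0}"
  proof
    fix w assume "w \<in> {layout_width (fD (GE m)) N Ed \<beta> | N Ed \<beta>. is_layout N Ed \<beta> (GE m)}"
    then obtain N' Ed' \<beta>' where "w = layout_width (fD (GE m)) N' Ed' \<beta>'" "is_layout N' Ed' \<beta>' (GE m)" by blast
    then show "w \<in> {0}" using w0 by simp
  qed
  have s2: "0 \<in> {layout_width (fD (GE m)) N Ed \<beta> | N Ed \<beta>. is_layout N Ed \<beta> (GE m)}"
    using w0[OF lay] lay by (metis (mono_tags, lifting) mem_Collect_eq)
  have "{layout_width (fD (GE m)) N Ed \<beta> | N Ed \<beta>. is_layout N Ed \<beta> (GE m)} = {0}"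
    using s1 s2 by blast
  then show ?thesis unfolding dbw_def layout_f_width_def by simp
qed

lemma rank_ge:
  assumes "finite R" "S \<subseteq> R" "gf2_indep_rows E S C"
  shows "card S \<le> gf2_rank E R C"
proof -
  have "{card S | S. S \<subseteq> R \<and> finite S \<and> gf2_indep_rows E S C} \<subseteq> card ` Pow R"
  proof
    fix n assume "n \<in> {card S | S. S \<subseteq> R \<and> finite S \<and> gf2_indep_rows E S C}"
    then obtain S' where "n = card S'" "S' \<subseteq> R" by blast
    then show "n \<in> card ` Pow R" by blast
  qed
  then have fin: "finite {card S | S. S \<subseteq> R \<and> finite S \<and> gf2_indep_rows E S C}"
    using assms(1) finite_subset by blast
  have "finite S" using assms(1,2) finite_subset by blast
  then have "card S \<in> {card S | S. S \<subseteq> R \<and> finite S \<and> gf2_indep_rows E S C}" using assms by blast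
  then show ?thesis unfolding gf2_rank_def using fin by simp
qed

lemma gD_G:
  assumes P: "k \<le> card ({..<m} \<inter> X)" and Q: "k \<le> card ({..<m} - X)" and XV: "X \<subseteq> GV m"
  shows "k \<le> gD (GV m) (GE m) X"
proof -
  let ?V = "GV m" and ?E = "GE m"
  define P where "P = {..<m} \<inter> X"
  define Q where "Q = {..<m} - X"
  have PV: "P \<subseteq> X" "P \<subseteq> ?V" and QV: "Q \<subseteq> ?V - X" unfolding P_def Q_def GV_def by auto
  have PQ: "P \<inter> Q = {}" unfolding P_def Q_def by auto
  have Pm: "\<And>i. i \<in> P \<Longrightarrow> i < m" and Qm: "\<And>i. i \<in> Q \<Longrightarrow> i < m" unfolding P_def Q_def by auto
  have encV: "enc m i j \<in> ?V" if "i < m" "j < m" "i \<noteq> j" for i j unfolding GV_def using that by blast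
  show ?thesis
  proof (cases "\<forall>i\<in>P. \<exists>j\<in>Q. enc m i j \<notin> X")
    case True
    have ind: "gf2_indep_rows ?E P (?V - X)"
      unfolding gf2_indep_rows_def
    proof (intro allI impI)
      fix T assume T: "T \<subseteq> P" "T \<noteq> {}"
      then obtain i where iT: "i \<in> T" by blast
      then have iP: "i \<in> P" using T by blast
      then obtain j where jQ: "j \<in> Q" and jX: "enc m i j \<notin> X" using True by blast
      have ij: "i \<noteq> j" using iP jQ PQ by blast
      have im: "i < m" "j < m" using Pm[OF iP] Qm[OF jQ] .
      have jT: "j \<notin> T" using jQ PQ T(1) by blast
      have "{r \<in> T. (r, enc m i j) \<in> ?E} = {i}"
        using iT jT by (auto simp: GE_adj[OF im ij])
      moreover have "enc m i j \<in> ?V - X" using encV[OF im ij] jX by blast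
      ultimately show "\<exists>c\<in>?V - X. odd (card {r \<in> T. (r, c) \<in> ?E})"
        by (intro bexI[of _ "enc m i j"]) simp_all
    qed
    have "card P \<le> gf2_rank ?E X (?V - X)"
      by (rule rank_ge[OF finite_subset[OF XV GV_finite] PV(1) ind])
    then show ?thesis using P unfolding gD_def P_def by linarith
  next
    case False
    then obtain i where iP: "i \<in> P" and allj: "\<forall>j\<in>Q. enc m i j \<in> X" by blast
    have ind: "gf2_indep_rows ?E Q X"
      unfolding gf2_indep_rows_def
    proof (intro allI impI)
      fix T assume T: "T \<subseteq> Q" "T \<noteq> {}"
      then obtain j where jT: "j \<in> T" by blast
      then have jQ: "j \<in> Q" using T by blast
      have ij: "i \<noteq> j" using iP jQ PQ by blast
      have im: "i < m" "j < m" using Pm[OF iP] Qm[OF jQ] .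
      have iT: "i \<notin> T" using iP PQ T(1) by blast
      have "{r \<in> T. (r, enc m i j) \<in> ?E} = {j}"
        using iT jT by (auto simp: GE_adj[OF im ij])
      moreover have "enc m i j \<in> X" using allj jQ by blast
      ultimately show "\<exists>c\<in>X. odd (card {r \<in> T. (r, c) \<in> ?E})"
        by (intro bexI[of _ "enc m i j"]) simp_all
    qed
    have "card Q \<le> gf2_rank ?E (?V - X) X"
      by (rule rank_ge[OF _ QV ind]) (use GV_finite in blast)
    then show ?thesis using Q unfolding gD_def Q_def by linarith
  qed
qed



lemma width_ge:
  assumes lay: "is_layout N Ed \<beta> (GV m)" and k1: "1 \<le> k" and km: "3 * k \<le> m"
  shows "k \<le> layout_width (gD (GV m) (GE m)) N Ed \<beta>"
proof -
  have ST: "subcubic_tree N Ed" and bij: "bij_betw \<beta> (leaves N Ed) (GV m)"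
    using lay by (auto simp: is_layout_def)
  have T: "is_tree N Ed" using ST by (simp add: subcubic_tree_def)
  define L where "L = leaves N Ed"
  have inj: "inj_on \<beta> L" and img: "\<beta> ` L = GV m" using bij unfolding L_def bij_betw_def by auto
  define W where "W = {x \<in> L. \<beta> x < m}"
  have WL: "W \<subseteq> leaves N Ed" unfolding W_def L_def by blast
  have mV: "{..<m} \<subseteq> GV m" unfolding GV_def by blast
  have imgW: "\<beta> ` W = {..<m}"
  proof
    show "\<beta> ` W \<subseteq> {..<m}" unfolding W_def by auto
    show "{..<m} \<subseteq> \<beta> ` W"
    proof
      fix y assume y: "y \<in> {..<m}"
      then have "y \<in> \<beta> ` L" using mV img by blast
      then obtain x where "x \<in> L" "y = \<beta> x" by blast
      then show "y \<in> \<beta> ` W" using y unfolding W_def by auto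
    qed
  qed
  have injW: "inj_on \<beta> W" by (rule inj_on_subset[OF inj]) (auto simp: W_def)
  have cW: "card W = m" using card_image[OF injW] imgW by simp
  obtain a b where ab: "{a, b} \<in> Ed" and w1: "k \<le> card (W \<inter> side N Ed a b)"
    and w2: "k \<le> card (W - side N Ed a b)"
    using balanced_edge[OF ST WL cW k1 km] by blast
  define S where "S = side N Ed a b"
  define X where "X = \<beta> ` (leaves N Ed \<inter> side N Ed a b)"
  have XV: "X \<subseteq> GV m" unfolding X_def using img L_def by blast
  have X1: "{..<m} \<inter> X = \<beta> ` (W \<inter> S)"
  proof
    show "{..<m} \<inter> X \<subseteq> \<beta> ` (W \<inter> S)"
    proof
      fix y assume y: "y \<in> {..<m} \<inter> X"
      then obtain x where x: "x \<in> L" "x \<in> S" "y = \<beta> x" unfolding X_def S_def L_def by blast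
      then have "x \<in> W" using y unfolding W_def by simp
      then show "y \<in> \<beta> ` (W \<inter> S)" using x by blast
    qed
    show "\<beta> ` (W \<inter> S) \<subseteq> {..<m} \<inter> X"
    proof
      fix y assume "y \<in> \<beta> ` (W \<inter> S)"
      then obtain x where x: "x \<in> W" "x \<in> S" "y = \<beta> x" by blast
      then have "x \<in> L" "y < m" unfolding W_def by auto
      then show "y \<in> {..<m} \<inter> X" using x unfolding X_def S_def L_def by blast
    qed
  qed
  have X2: "{..<m} - X = \<beta> ` (W - S)"
  proof
    show "{..<m} - X \<subseteq> \<beta> ` (W - S)"
    proof
      fix y assume y: "y \<in> {..<m} - X"
      then have "y \<in> \<beta> ` W" using imgW by blast
      then obtain x where x: "x \<in> W" "y = \<beta> x" by blast
      have "x \<notin> S" using x y WL unfolding X_def S_def by blast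
      then show "y \<in> \<beta> ` (W - S)" using x by blast
    qed
    show "\<beta> ` (W - S) \<subseteq> {..<m} - X"
    proof
      fix y assume "y \<in> \<beta> ` (W - S)"
      then obtain x where x: "x \<in> W" "x \<notin> S" "y = \<beta> x" by blast
      have "y < m" using x unfolding W_def by simp
      moreover have "y \<notin> X"
      proof
        assume "y \<in> X"
        then obtain x' where x': "x' \<in> L" "x' \<in> S" "y = \<beta> x'" unfolding X_def S_def L_def by blast
        have "x \<in> L" using x unfolding W_def by blast
        then have "x = x'" using inj_onD[OF inj] x'(1,3) x(3) by metis
        then show False using x x' by blast
      qed
      ultimately show "y \<in> {..<m} - X" by blast
    qed
  qed
  have c1: "card ({..<m} \<inter> X) = card (W \<inter> S)"
    unfolding X1 by (rule card_image) (rule inj_on_subset[OF injW], blast)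
  have c2: "card ({..<m} - X) = card (W - S)"
    unfolding X2 by (rule card_image) (rule inj_on_subset[OF injW], blast)
  have g1: "k \<le> card ({..<m} \<inter> X)" using c1 w1 unfolding S_def by simp
  have g2: "k \<le> card ({..<m} - X)" using c2 w2 unfolding S_def by simp
  have g: "k \<le> gD (GV m) (GE m) X" by (rule gD_G[OF g1 g2 XV])
  define F where "F = {gD (GV m) (GE m) (\<beta> ` (leaves N Ed \<inter> side N Ed a b)) | a b. {a, b} \<in> Ed}"
  have finN: "finite N" using tree_edges(4)[OF T] .
  have "F \<subseteq> (\<lambda>(a, b). gD (GV m) (GE m) (\<beta> ` (leaves N Ed \<inter> side N Ed a b))) ` (N \<times> N)"
  proof
    fix w assume "w \<in> F"
    then obtain a' b' where "{a', b'} \<in> Ed" "w = gD (GV m) (GE m) (\<beta> ` (leaves N Ed \<inter> side N Ed a' b'))"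
      unfolding F_def by blast
    moreover have "a' \<in> N" "b' \<in> N" using edge_ends[OF T \<open>{a', b'} \<in> Ed\<close>] by auto
    ultimately show "w \<in> (\<lambda>(a, b). gD (GV m) (GE m) (\<beta> ` (leaves N Ed \<inter> side N Ed a b))) ` (N \<times> N)"
      by (intro image_eqI[of _ _ "(a', b')"]) auto
  qed
  then have finF: "finite (insert 0 F)" using finN finite_subset by blast
  have "gD (GV m) (GE m) X \<in> insert 0 F" unfolding F_def X_def using ab by blast
  then have "gD (GV m) (GE m) X \<le> Max (insert 0 F)" using Max_ge[OF finF] by blast
  then show ?thesis using g unfolding layout_width_def F_def by linarith
qed

lemma bcrk_ge:
  assumes k1: "1 \<le> k"
  shows "k \<le> bcrk (GV (3 * k)) (GE (3 * k))"
proof -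
  let ?m = "3 * k"
  have "0 \<in> GV ?m" using k1 unfolding GV_def by simp
  then have ne: "GV ?m \<noteq> {}" by blast
  obtain N Ed \<beta> where lay: "is_layout N Ed (\<beta>::nat \<Rightarrow> nat) (GV ?m)"
    using layout_exists[OF GV_finite ne] by blast
  define S where "S = {layout_width (gD (GV ?m) (GE ?m)) N Ed \<beta> | N Ed (\<beta>::nat \<Rightarrow> nat). is_layout N Ed \<beta> (GV ?m)}"
  have Sne: "S \<noteq> {}" unfolding S_def using lay by blast
  have "\<forall>w\<in>S. k \<le> w"
  proof
    fix w assume "w \<in> S"
    then obtain N' Ed' \<beta>' where "w = layout_width (gD (GV ?m) (GE ?m)) N' Ed' \<beta>'" "is_layout N' Ed' (\<beta>'::nat\<Rightarrow>nat) (GV ?m)"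
      unfolding S_def by blast
    then show "k \<le> w" using width_ge k1 by simp
  qed
  then have "k \<le> Inf S" using Sne by (simp add: cInf_greatest)
  then show ?thesis unfolding bcrk_def layout_f_width_def S_def .
qed

theorem mainTheorem15:
  shows "\<not> (\<exists>g :: nat \<Rightarrow> nat. \<forall>V E. digraph V E \<longrightarrow> bcrk V E \<le> g (dbw V E))"
proof
  assume "\<exists>g :: nat \<Rightarrow> nat. \<forall>V E. digraph V E \<longrightarrow> bcrk V E \<le> g (dbw V E)"
  then obtain g :: "nat \<Rightarrow> nat" where g: "\<forall>V E. digraph V E \<longrightarrow> bcrk V E \<le> g (dbw V E)" by blast
  define k where "k = Suc (g 0)"
  have k1: "1 \<le> k" unfolding k_def by simp
  have "bcrk (GV (3 * k)) (GE (3 * k)) \<le> g (dbw (GV (3 * k)) (GE (3 * k)))"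
    using g digraph_G by blast
  moreover have "dbw (GV (3 * k)) (GE (3 * k)) = 0" using k1 by (intro dbw_G) simp
  moreover have "k \<le> bcrk (GV (3 * k)) (GE (3 * k))" using bcrk_ge[OF k1] .
  ultimately show False unfolding k_def by simp
qed


end
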